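(* Z-light-first order is energy-bound: for every constant $\Delta\ge1$ there is a constant $C$ (depending only on $\Delta$) such that for every rooted tree $T$ with $n$ vertices, every vertex having at most $\Delta$ children, stored in Z-light-first order, the total energy $\sum_{v}\sum_{c \text{ child of } v} \mathrm{dist}(p_v,p_c)$ of every vertex sending a message to each of its children is at most $C n$.
   Context: Processors sit on the cells of a two-dimensional grid; sending a message between processors at $(x_1,y_1)$ and $(x_2,y_2)$ costs energy $|x_1-x_2|+|y_1-y_2|$. Z-order (Morton order) is the enumeration of grid cells $(x,y)$, $x,y\in\{0,\dots,2^m-1\}$, in which the cell at position $i$ (counting from $0$) has $x$ equal to the number formed by the even-indexed bits of $i$ and $y$ equal to the number formed by the odd-indexed bits of $i$ (bit $2t$ of $i$ is bit $t$ of $x$, bit $2t+1$ of $i$ is bit $t$ of $y$). $\mathrm{dist}(i,j)$ is the energy of sending a message from the processor at position $i$ to the one at position $j$. Light-first order: each tree vertex $v$ is stored in one processor at position $p_v$ (root at the first position). Let $s(v)$ be the size of the subtree rooted at $v$. For each vertex $v$ with children indexed $c_1,\dots,c_d$ with $s(c_1)\le\dots\le s(c_d)$, child $c_i$ is stored at position $p_v+1+\sum_{j=1}^{i-1}s(c_j)$. Z-light-first order is light-first order with respect to Z-order. *)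

theory Defs
  imports Complex_Main
begin

text \<open>Coordinates of the cell at Z-order position i: x collects the even-indexed
bits of i, y the odd-indexed bits. (Independent of the grid exponent m,
as long as i < 4^m.)\<close>

fun zx :: "nat \<Rightarrow> nat" where
  "zx i = (if i = 0 then 0 else i mod 2 + 2 * zx (i div 4))"

fun zy :: "nat \<Rightarrow> nat" where
  "zy i = (if i = 0 then 0 else (i div 2) mod 2 + 2 * zy (i div 4))"

declare zx.simps[simp del] zy.simps[simp del]

definition zdist :: "nat \<Rightarrow> nat \<Rightarrow> nat" where
  "zdist i j = nat \<bar>int (zx i) - int (zx j)\<bar> + nat \<bar>int (zy i) - int (zy j)\<bar>"

datatype tree = Node "tree list"

fun tsize :: "tree \<Rightarrow> nat" where
  "tsize (Node cs) = 1 + sum_list (map tsize cs)"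

fun max_children :: "nat \<Rightarrow> tree \<Rightarrow> bool" where
  "max_children d (Node cs) = (length cs \<le> d \<and> (\<forall>c\<in>set cs. max_children d c))"

fun light_first :: "tree \<Rightarrow> bool" where
  "light_first (Node cs) = (sorted (map tsize cs) \<and> (\<forall>c\<in>set cs. light_first c))"

text \<open>Energy of the light-first layout: vertex stored at position p, its
children stored consecutively starting at p+1, each child c_i at
p + 1 + sum of sizes of the earlier children; each vertex sends one message
to each of its children.  energy_list p q cs: parent at p, next child at q.\<close>
fun energy :: "nat \<Rightarrow> tree \<Rightarrow> nat"
and energy_list :: "nat \<Rightarrow> nat \<Rightarrow> tree list \<Rightarrow> nat" where
  "energy p (Node cs) = energy_list p (Suc p) cs"
| "energy_list p q [] = 0"
| "energy_list p q (c # cs) = zdist p q + energy q c + energy_list p (q + tsize c) cs"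

end

theory Submission imports Defs begin

lemma zx_rec: "zx i = i mod 2 + 2 * zx (i div 4)"
  by (cases "i = 0") (simp_all add: zx.simps[of i] zx.simps[of 0])

lemma zy_rec: "zy i = (i div 2) mod 2 + 2 * zy (i div 4)"
  by (cases "i = 0") (simp_all add: zy.simps[of i] zy.simps[of 0])

lemma zx0: "zx 0 = 0" by (simp add: zx.simps)
lemma zy0: "zy 0 = 0" by (simp add: zy.simps)

lemma mod4_aux: "(a::nat) mod (4 * 4^K) = 4 * ((a div 4) mod 4^K) + a mod 4"
  by (metis mod_mult2_eq mult.commute)

lemma zx_split: "zx a = zx (a mod 4^K) + 2^K * zx (a div 4^K)"
proof (induction K arbitrary: a)
  case 0 then show ?case by (simp add: zx0)
next
  case (Suc K)
  have e1: "(a mod 4^Suc K) mod 2 = a mod 2"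
  proof -
    have "(4 * ((a div 4) mod 4^K) + a mod 4) mod 2 = (a mod 4) mod 2"
      by (metis mod_mult_self4 mult.assoc numeral_Bit0 mult_2 add.commute)
    also have "... = a mod 2" by (rule mod_mod_cancel) simp
    finally show ?thesis by (simp add: mod4_aux)
  qed
  have e2: "(a mod 4^Suc K) div 4 = (a div 4) mod 4^K"
    by (simp add: mod4_aux)
  have e3: "a div 4 div 4^K = a div 4^Suc K"
    by (simp add: div_mult2_eq)
  have "zx a = a mod 2 + 2 * zx (a div 4)" by (rule zx_rec)
  also have "... = a mod 2 + 2 * (zx ((a div 4) mod 4^K) + 2^K * zx (a div 4 div 4^K))"
    using Suc.IH[of "a div 4"] by simp
  also have "... = zx (a mod 4^Suc K) + 2^Suc K * zx (a div 4^Suc K)"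
    using zx_rec[of "a mod 4^Suc K"] e1 e2 e3 by simp
  finally show ?case .
qed

lemma zy_split: "zy a = zy (a mod 4^K) + 2^K * zy (a div 4^K)"
proof (induction K arbitrary: a)
  case 0 then show ?case by (simp add: zy0)
next
  case (Suc K)
  have e1: "(a mod 4^Suc K) div 2 mod 2 = a div 2 mod 2"
  proof -
    have "(a mod 4^Suc K) div 2 = 2 * ((a div 4) mod 4^K) + (a mod 4) div 2"
      by (simp add: mod4_aux)
    moreover have "a mod 4 = 2*(a div 2 mod 2) + a mod 2" using mod_mult2_eq[of a 2 2] by simp
    ultimately show ?thesis by simp
  qed
  have e2: "(a mod 4^Suc K) div 4 = (a div 4) mod 4^K"
    by (simp add: mod4_aux)
  have e3: "a div 4 div 4^K = a div 4^Suc K"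
    by (simp add: div_mult2_eq)
  have "zy a = a div 2 mod 2 + 2 * zy (a div 4)" by (rule zy_rec)
  also have "... = a div 2 mod 2 + 2 * (zy ((a div 4) mod 4^K) + 2^K * zy (a div 4 div 4^K))"
    using Suc.IH[of "a div 4"] by simp
  also have "... = zy (a mod 4^Suc K) + 2^Suc K * zy (a div 4^Suc K)"
    using zy_rec[of "a mod 4^Suc K"] e1 e2 e3 by simp
  finally show ?case .
qed

lemma zx_bound: "x < 4^K \<Longrightarrow> zx x < 2^K"
proof (induction K arbitrary: x)
  case 0 then show ?case by (simp add: zx0)
next
  case (Suc K)
  have "x div 4 < 4^K" using Suc.prems by (simp add: less_mult_imp_div_less)
  then have "zx (x div 4) < 2^K" by (rule Suc.IH)
  then show ?case using zx_rec[of x] by simp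
qed

lemma zy_bound: "x < 4^K \<Longrightarrow> zy x < 2^K"
proof (induction K arbitrary: x)
  case 0 then show ?case by (simp add: zy0)
next
  case (Suc K)
  have "x div 4 < 4^K" using Suc.prems by (simp add: less_mult_imp_div_less)
  then have "zy (x div 4) < 2^K" by (rule Suc.IH)
  then show ?case using zy_rec[of x] by simp
qed

lemma zdist_bound:
  assumes "a div 4^K = b div 4^K"
  shows "zdist a b < 2 * 2^K"
proof -
  have ax: "zx a = zx (a mod 4^K) + 2^K * zx (a div 4^K)" by (rule zx_split)
  have bx: "zx b = zx (b mod 4^K) + 2^K * zx (a div 4^K)" using zx_split[of b K] assms by simp
  have ay: "zy a = zy (a mod 4^K) + 2^K * zy (a div 4^K)" by (rule zy_split)
  have by': "zy b = zy (b mod 4^K) + 2^K * zy (a div 4^K)" using zy_split[of b K] assms by simp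
  have p: "(4::nat)^K > 0" by simp
  have "zx (a mod 4^K) < 2^K" "zx (b mod 4^K) < 2^K" "zy (a mod 4^K) < 2^K" "zy (b mod 4^K) < 2^K"
    using zx_bound zy_bound p by auto
  then show ?thesis unfolding zdist_def using ax bx ay by' by linarith
qed


fun edges :: "nat \<Rightarrow> tree \<Rightarrow> (nat \<times> nat) list"
and edges_list :: "nat \<Rightarrow> nat \<Rightarrow> tree list \<Rightarrow> (nat \<times> nat) list" where
  "edges p (Node cs) = edges_list p (Suc p) cs"
| "edges_list p q [] = []"
| "edges_list p q (c # cs) = (p, q) # edges q c @ edges_list p (q + tsize c) cs"

lemma tsize_pos: "tsize t > 0" by (cases t) simp

lemma energy_edges:
  "energy p t = sum_list (map (\<lambda>e. zdist (fst e) (snd e)) (edges p t))"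
  "energy_list p q cs = sum_list (map (\<lambda>e. zdist (fst e) (snd e)) (edges_list p q cs))"
  by (induction p t and p q cs rule: energy_energy_list.induct) simp_all

lemma edges_range:
  "\<forall>e\<in>set (edges p t). p \<le> fst e \<and> fst e < snd e \<and> snd e < p + tsize t"
  "p < q \<Longrightarrow> \<forall>e\<in>set (edges_list p q cs). p \<le> fst e \<and> fst e < snd e \<and> snd e < q + sum_list (map tsize cs)"
proof (induction p t and p q cs rule: edges_edges_list.induct)
  case (1 p cs) then show ?case by fastforce
next
  case (2 p q) then show ?case by simp
next
  case (3 p q c cs)
  have "p < q + tsize c" using 3(3) by simp
  then have r: "\<forall>e\<in>set (edges_list p (q + tsize c) cs). p \<le> fst e \<and> fst e < snd e \<and> snd e < q + tsize c + sum_list (map tsize cs)"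
    using 3(2) by blast
  have "0 < tsize c" by (rule tsize_pos)
  then show ?case using 3(1) r 3(3) by fastforce
qed

definition cr :: "nat \<Rightarrow> nat \<Rightarrow> nat \<times> nat \<Rightarrow> bool" where
  "cr m B e = (fst e < m \<and> m \<le> snd e \<and> snd e < fst e + B)"

definition cnt :: "nat \<Rightarrow> nat \<Rightarrow> (nat \<times> nat) list \<Rightarrow> nat" where
  "cnt m B es = length (filter (cr m B) es)"

lemma cnt_simps[simp]: "cnt m B [] = 0" "cnt m B (e # es) = (if cr m B e then 1 else 0) + cnt m B es"
  "cnt m B (xs @ ys) = cnt m B xs + cnt m B ys"
  by (simp_all add: cnt_def)

lemma cnt_zero: "\<forall>e\<in>set es. \<not> cr m B e \<Longrightarrow> cnt m B es = 0"
  by (simp add: cnt_def filter_empty_conv)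

lemma cnt_lo: "m \<le> q \<Longrightarrow> cnt m B (edges q c) = 0"
  using edges_range(1)[of q c] by (intro cnt_zero) (auto simp: cr_def)

lemma cnt_hi: "q + tsize c \<le> m \<Longrightarrow> cnt m B (edges q c) = 0"
  using edges_range(1)[of q c] by (intro cnt_zero) (auto simp: cr_def)

lemma cnt_M: "m \<le> q \<Longrightarrow> cnt m B (edges_list p q cs) \<le> length cs"
proof (induction cs arbitrary: q)
  case Nil then show ?case by simp
next
  case (Cons c cs)
  have "cnt m B (edges_list p (q + tsize c) cs) \<le> length cs" using Cons by simp
  then show ?case using cnt_lo[OF Cons.prems, of B c] by simp
qed

lemma cnt_M0: "m \<le> q \<Longrightarrow> p + B \<le> q \<Longrightarrow> cnt m B (edges_list p q cs) = 0"
proof (induction cs arbitrary: q)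
  case Nil then show ?case by simp
next
  case (Cons c cs)
  have "cnt m B (edges_list p (q + tsize c) cs) = 0" using Cons by simp
  then show ?case using cnt_lo[OF Cons.prems(1), of B c] Cons.prems by (simp add: cr_def)
qed

lemma A_list:
  assumes IH: "\<forall>c\<in>set cs. \<forall>k p. tsize c \<le> 2^k \<longrightarrow> cnt m B (edges p c) \<le> D*(k+1)"
  and "sorted (map tsize cs)" and "length cs \<le> D" and "sum_list (map tsize cs) < 2^k"
  shows "cnt m B (edges_list p q cs) \<le> D*(k+1)"
  using assms
proof (induction cs arbitrary: q)
  case Nil then show ?case by simp
next
  case (Cons c cs)
  let ?s = "tsize c"
  have e: "cnt m B (edges_list p q (c # cs)) = (if cr m B (p,q) then 1 else 0) + cnt m B (edges q c) + cnt m B (edges_list p (q + ?s) cs)"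
    by simp
  consider (lo) "m \<le> q" | (hi) "q + ?s \<le> m" | (mid) "q < m" "m < q + ?s" by linarith
  then show ?case
  proof cases
    case lo
    have "cnt m B (edges_list p (q + ?s) cs) \<le> length cs" using lo by (intro cnt_M) simp
    then show ?thesis using e cnt_lo[OF lo] Cons.prems(3) by (simp split: if_splits)
  next
    case hi
    have "cnt m B (edges_list p (q + ?s) cs) \<le> D*(k+1)"
      using Cons.IH[of "q + ?s"] Cons.prems by simp
    moreover have "\<not> cr m B (p,q)" using hi tsize_pos[of c] by (simp add: cr_def)
    ultimately show ?thesis using e cnt_hi[OF hi] by simp
  next
    case mid
    have ncr: "\<not> cr m B (p,q)" using mid by (simp add: cr_def)
    have r: "cnt m B (edges_list p (q + ?s) cs) \<le> length cs" using mid by (intro cnt_M) simp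
    show ?thesis
    proof (cases cs)
      case Nil
      have "cnt m B (edges q c) \<le> D*(k+1)" using Cons.prems by simp
      then show ?thesis using e ncr Nil by simp
    next
      case (Cons d ds)
      have "?s \<le> tsize d" using Cons.prems(2) \<open>cs = d # ds\<close> by simp
      then have "2 * ?s < 2^k" using Cons.prems(4) \<open>cs = d # ds\<close> by simp
      moreover have "?s > 0" by (rule tsize_pos)
      ultimately obtain k' where k': "k = Suc k'" by (cases k) auto
      have "?s \<le> 2^k'" using \<open>2 * ?s < 2^k\<close> k' by simp
      then have "cnt m B (edges q c) \<le> D*(k'+1)" using Cons.prems(1) by simp
      moreover have "length cs + 1 \<le> D" using Cons.prems(3) by simp
      ultimately show ?thesis using e ncr r k' by (simp add: algebra_simps)
    qed
  qed
qed

lemma A_tree: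
  "max_children D t \<Longrightarrow> light_first t \<Longrightarrow> tsize t \<le> 2^k \<Longrightarrow> cnt m B (edges p t) \<le> D*(k+1)"
proof (induction t arbitrary: k p)
  case (Node cs)
  have "cnt m B (edges_list p (Suc p) cs) \<le> D*(k+1)"
    apply (rule A_list)
    using Node by auto
  then show ?case by simp
qed

lemma B_list:
  assumes IH: "\<forall>c\<in>set cs. \<forall>p. cnt m B (edges p c) \<le> D*(k+2)"
  and "\<forall>c\<in>set cs. max_children D c \<and> light_first c"
  and "sorted (map tsize cs)" and "length cs \<le> D" and "B \<le> 2^k" and "p \<le> q"
  shows "cnt m B (edges_list p q cs) \<le> D*(k+2)"
  using assms
proof (induction cs arbitrary: q)
  case Nil then show ?case by simp
next
  case (Cons c cs)
  let ?s = "tsize c"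
  have e: "cnt m B (edges_list p q (c # cs)) = (if cr m B (p,q) then 1 else 0) + cnt m B (edges q c) + cnt m B (edges_list p (q + ?s) cs)"
    by simp
  consider (lo) "m \<le> q" | (hi) "q + ?s \<le> m" | (mid) "q < m" "m < q + ?s" by linarith
  then show ?case
  proof cases
    case lo
    have "cnt m B (edges_list p (q + ?s) cs) \<le> length cs" using lo by (intro cnt_M) simp
    then have "cnt m B (edges_list p q (c # cs)) \<le> D" using e cnt_lo[OF lo] Cons.prems(4) by simp
    moreover have "D \<le> D*(k+2)" by simp
    ultimately show ?thesis by linarith
  next
    case hi
    have "cnt m B (edges_list p (q + ?s) cs) \<le> D*(k+2)"
      using Cons.IH[of "q + ?s"] Cons.prems by simp
    moreover have "\<not> cr m B (p,q)" using hi tsize_pos[of c] by (simp add: cr_def)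
    ultimately show ?thesis using e cnt_hi[OF hi] by simp
  next
    case mid
    have ncr: "\<not> cr m B (p,q)" using mid by (simp add: cr_def)
    have r: "cnt m B (edges_list p (q + ?s) cs) \<le> length cs" using mid by (intro cnt_M) simp
    have ic: "cnt m B (edges q c) \<le> D*(k+2)" using Cons.prems(1) by simp
    show ?thesis
    proof (cases "cs = [] \<or> B \<le> ?s")
      case True
      have "cnt m B (edges_list p (q + ?s) cs) = 0"
      proof (cases "cs = []")
        case False
        then have "B \<le> ?s" using True by simp
        then show ?thesis using mid Cons.prems(6) by (intro cnt_M0) simp_all
      qed simp
      then show ?thesis using e ncr ic by simp
    next
      case False
      then have "?s \<le> 2^k" using Cons.prems(5) by simp
      then have "cnt m B (edges q c) \<le> D*(k+1)" using Cons.prems(2) by (intro A_tree) simp_all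
      moreover have "length cs + 1 \<le> D" using Cons.prems(4) by simp
      ultimately show ?thesis using e ncr r by (simp add: algebra_simps)
    qed
  qed
qed

lemma B_tree:
  "max_children D t \<Longrightarrow> light_first t \<Longrightarrow> B \<le> 2^k \<Longrightarrow> cnt m B (edges p t) \<le> D*(k+2)"
proof (induction t arbitrary: p)
  case (Node cs)
  have "cnt m B (edges_list p (Suc p) cs) \<le> D*(k+2)"
    apply (rule B_list)
    using Node by auto
  then show ?case by simp
qed


definition g :: "nat \<times> nat \<Rightarrow> nat \<Rightarrow> nat \<Rightarrow> nat" where
  "g e L m = (if 0 < m \<and> 4^L dvd m \<and> cr m (4^(L+1)) e then 4*2^L else 0)"

lemma edge_bound:
  assumes ab: "a < b" and bn: "b < n"
  shows "zdist a b \<le> (\<Sum>L<n. \<Sum>m<n. g (a,b) L m)"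
proof -
  have b4: "b < 4^b"
  proof -
    have "b < 2^b" by (rule less_exp)
    also have "(2::nat)^b \<le> 4^b" by (simp add: power_mono)
    finally show ?thesis .
  qed
  have ex: "\<exists>K. a div 4^K = b div 4^K"
    by (rule exI[of _ b]) (use ab b4 in simp)
  define K where "K = (LEAST K. a div 4^K = b div 4^K)"
  have hK: "a div 4^K = b div 4^K" unfolding K_def by (rule LeastI_ex[OF ex])
  have "K \<noteq> 0"
  proof
    assume "K = 0"
    with hK have "a = b" by simp
    with ab show False by simp
  qed
  then obtain L where KL: "K = Suc L" by (cases K) auto
  have nL: "a div 4^L \<noteq> b div 4^L"
    using not_less_Least[of L "\<lambda>K. a div 4^K = b div 4^K"] KL K_def by auto
  have "a div 4^L \<le> b div 4^L" using ab by (simp add: div_le_mono)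
  with nL have lt: "a div 4^L < b div 4^L" by simp
  define m where "m = b div 4^L * 4^L"
  have mb: "m \<le> b" unfolding m_def by (rule div_times_less_eq_dividend)
  have am: "a < m"
  proof -
    have "a = a div 4^L * 4^L + a mod 4^L" by (rule div_mult_mod_eq[symmetric])
    moreover have "a mod 4^L < 4^L" by simp
    ultimately have "a < a div 4^L * 4^L + 4^L" by linarith
    then have "a < (a div 4^L + 1) * 4^L" by (simp add: algebra_simps)
    also have "... \<le> b div 4^L * 4^L" using lt by (intro mult_right_mono) simp_all
    finally show ?thesis unfolding m_def .
  qed
  have ba: "b < a + 4^(L+1)"
  proof -
    have "b = b div 4^K * 4^K + b mod 4^K" by (rule div_mult_mod_eq[symmetric])
    moreover have "a = b div 4^K * 4^K + a mod 4^K" using hK div_mult_mod_eq[of a "4^K"] by simp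
    moreover have "b mod 4^K < 4^K" by simp
    moreover have "(4::nat)^(L+1) = 4^K" using KL by simp
    ultimately show ?thesis by linarith
  qed
  have m4: "4^L \<le> m" unfolding m_def using lt by simp
  have Ln: "L < n"
  proof -
    have "L < 2^L" by (rule less_exp)
    also have "(2::nat)^L \<le> 4^L" by (simp add: power_mono)
    finally show ?thesis using m4 mb bn by linarith
  qed
  have mn: "m < n" using mb bn by simp
  have m0: "0 < m" using am by simp
  have md: "4^L dvd m" unfolding m_def by simp
  have gm: "g (a,b) L m = 4 * 2^L"
    unfolding g_def cr_def using am mb ba m0 md by simp
  have "zdist a b < 2 * 2^K" by (rule zdist_bound[OF hK])
  then have "zdist a b \<le> g (a,b) L m" using gm KL by simp
  also have "... \<le> (\<Sum>m<n. g (a,b) L m)" using mn by (intro member_le_sum) auto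
  also have "... \<le> (\<Sum>L<n. \<Sum>m<n. g (a,b) L m)" using Ln by (intro member_le_sum[where f="\<lambda>L. \<Sum>m<n. g (a,b) L m"]) auto
  finally show ?thesis .
qed

lemma sum_list_swap:
  "sum_list (map (\<lambda>e. \<Sum>x\<in>A. f e x) es) = (\<Sum>x\<in>A. sum_list (map (\<lambda>e. f e x) es))"
  by (induction es) (simp_all add: sum.distrib)

lemma sum_list_g:
  "sum_list (map (\<lambda>e. g e L m) es) = (if 0 < m \<and> 4^L dvd m then 4*2^L * cnt m (4^(L+1)) es else 0)"
  by (induction es) (auto simp: g_def)

lemma card_mult:
  "card {m\<in>{..<n}. 0 < m \<and> (4::nat)^L dvd m} * 4^L \<le> n"
proof -
  let ?S = "{m\<in>{..<n}. 0 < m \<and> (4::nat)^L dvd m}"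
  let ?N = "(n - 1) div 4^L"
  have "?S \<subseteq> (\<lambda>j. j * 4^L) ` {1..?N}"
  proof
    fix m assume "m \<in> ?S"
    then have m: "m < n" "0 < m" "4^L dvd m" by auto
    have e: "m = m div 4^L * 4^L" using m(3) by simp
    have "m div 4^L \<ge> 1" using m(2) e by (metis div_0 le_less_linear less_one mult_0 not_gr0)
    moreover have "m div 4^L \<le> ?N" using m(1) by (intro div_le_mono) simp
    ultimately show "m \<in> (\<lambda>j. j * 4^L) ` {1..?N}" using e by (intro image_eqI[of _ _ "m div 4^L"]) auto
  qed
  then have "card ?S \<le> card ((\<lambda>j. j * 4^L) ` {1..?N})" by (intro card_mono) auto
  also have "... \<le> card {1..?N}" by (rule card_image_le) simp
  finally have "card ?S \<le> ?N" by simp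
  then have "card ?S * 4^L \<le> ?N * 4^L" by simp
  also have "... \<le> n - 1" by (rule div_times_less_eq_dividend)
  finally show ?thesis by simp
qed

lemma sum_if_const: "finite A \<Longrightarrow> (\<Sum>x\<in>A. if P x then (c::nat) else 0) = c * card {x\<in>A. P x}"
  by (simp add: sum.inter_filter[symmetric])

lemma geo: "(\<Sum>L<N. (real L + 2) / 2^L) = 6 - (2 * real N + 6) / 2^N"
proof (induction N)
  case 0 then show ?case by simp
next
  case (Suc N)
  have a: "(\<Sum>L<Suc N. (real L + 2) / 2^L) = 6 - (2 * real N + 6) / 2^N + (real N + 2) / 2^N"
    using Suc.IH by simp
  have b: "- ((2 * real N + 6) / 2^N) + (real N + 2) / 2^N = - ((real N + 4) / 2^N)"
    by (simp add: field_simps)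
  have c: "(2 * real (Suc N) + 6) / 2^Suc N = (real N + 4) / 2^N"
    by (simp add: field_simps)
  show ?case using a b c by linarith
qed

lemma main_bound:
  assumes D: "max_children D t" "light_first t"
  shows "real (energy 0 t) \<le> 48 * real D * real (tsize t)"
proof -
  let ?n = "tsize t"
  let ?es = "edges 0 t"
  let ?c = "\<lambda>L. card {m\<in>{..<?n}. 0 < m \<and> (4::nat)^L dvd m}"
  have "energy 0 t = sum_list (map (\<lambda>e. zdist (fst e) (snd e)) ?es)" by (rule energy_edges)
  also have "... \<le> sum_list (map (\<lambda>e. \<Sum>L<?n. \<Sum>m<?n. g e L m) ?es)"
  proof (rule sum_list_mono)
    fix e assume "e \<in> set ?es"
    then have "fst e < snd e" "snd e < ?n" using edges_range(1)[of 0 t] by auto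
    then show "zdist (fst e) (snd e) \<le> (\<Sum>L<?n. \<Sum>m<?n. g e L m)"
      using edge_bound[of "fst e" "snd e" ?n] by (cases e) simp
  qed
  also have "... = (\<Sum>L<?n. \<Sum>m<?n. sum_list (map (\<lambda>e. g e L m) ?es))"
    by (simp add: sum_list_swap)
  also have "... \<le> (\<Sum>L<?n. \<Sum>m<?n. (if 0 < m \<and> 4^L dvd m then 4*2^L * (D*(2*L+4)) else 0))"
  proof (intro sum_mono)
    fix L m
    have "(4::nat)^(L+1) = (2^2)^(L+1)" by simp
    also have "... = 2^(2*(L+1))" by (rule power_mult[symmetric])
    finally have p4: "(4::nat)^(L+1) \<le> 2^(2*L+2)" by simp
    have "cnt m (4^(L+1)) ?es \<le> D * ((2*L+2)+2)"
      using D p4 by (intro B_tree) simp_all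
    then have "cnt m (4^(L+1)) ?es \<le> D * (2*L+4)" by (simp add: algebra_simps)
    then have "4*2^L * cnt m (4^(L+1)) ?es \<le> 4*2^L * (D * (2*L+4))" by (rule mult_left_mono) simp
    then show "sum_list (map (\<lambda>e. g e L m) ?es) \<le> (if 0 < m \<and> 4^L dvd m then 4*2^L * (D*(2*L+4)) else 0)"
      by (simp only: sum_list_g) simp
  qed
  also have "... = (\<Sum>L<?n. 4*2^L * (D*(2*L+4)) * ?c L)"
    by (rule sum.cong[OF refl]) (rule sum_if_const, simp)
  finally have E: "energy 0 t \<le> (\<Sum>L<?n. 4*2^L * (D*(2*L+4)) * ?c L)" .
  have "real (energy 0 t) \<le> (\<Sum>L<?n. real (4*2^L * (D*(2*L+4)) * ?c L))"
    using E by (simp only: of_nat_sum[symmetric] of_nat_le_iff)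
  also have "... \<le> (\<Sum>L<?n. 8 * real D * real ?n * ((real L + 2) / 2^L))"
  proof (intro sum_mono)
    fix L
    have "real (?c L * 4^L) \<le> real ?n" using card_mult[of ?n L] by (simp only: of_nat_le_iff)
    then have cm: "real (?c L) * 4^L \<le> real ?n" by simp
    have "(4::real)^L = 2^L * 2^L" by (simp add: power_mult_distrib[symmetric])
    then have "real (?c L) * 2^L \<le> real ?n / 2^L" using cm by (simp add: field_simps)
    then have "real (?c L) * 2^L * (8 * real D * (real L + 2)) \<le> real ?n / 2^L * (8 * real D * (real L + 2))"
      by (intro mult_right_mono) simp_all
    then show "real (4*2^L * (D*(2*L+4)) * ?c L) \<le> 8 * real D * real ?n * ((real L + 2) / 2^L)"
      by (simp add: field_simps)
  qed
  also have "... = 8 * real D * real ?n * (\<Sum>L<?n. (real L + 2) / 2^L)"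
    by (simp add: sum_distrib_left)
  also have "... \<le> 8 * real D * real ?n * 6"
    by (intro mult_left_mono) (simp_all add: geo)
  finally show ?thesis by simp
qed

theorem mainTheorem3:
  "\<forall>\<Delta>::nat. \<Delta> \<ge> 1 \<longrightarrow>
     (\<exists>C::real. \<forall>t. max_children \<Delta> t \<and> light_first t \<longrightarrow>
        real (energy 0 t) \<le> C * real (tsize t))"
proof (intro allI impI)
  fix \<Delta> :: nat
  show "\<exists>C::real. \<forall>t. max_children \<Delta> t \<and> light_first t \<longrightarrow>
        real (energy 0 t) \<le> C * real (tsize t)"
  proof (intro exI[of _ "48 * real \<Delta>"] allI impI)
    fix t assume "max_children \<Delta> t \<and> light_first t"
    then show "real (energy 0 t) \<le> 48 * real \<Delta> * real (tsize t)"
      using main_bound[of \<Delta> t] by simp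
  qed
qed

end
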